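(* Let $[a,b]$ be an interval of length $\ell=b-a+1$ on which the offline optimal takes the form of Structure 1 or Structure 2, and assume $\bar y_{a\to b}:=\frac1\ell\sum_{j=a}^b y_j\in[-B,B]$. Then the predictions $x_j$ of FLH-OGD satisfy $$\sum_{j=a}^b (y_j-x_j)^2-(y_j-u_j)^2\le 10(B+G)^2\log n-\frac{4\lambda^2}{\ell}.$$
   Context: Squared loss game: $n\ge 3$, $B\ge 1$, $G\ge B$; for $t=1,\dots,n$ the learner predicts $x_t\in[-B,B]$, then the adversary reveals $y_t\in[-G,G]$. $[a,b]=\{a,\dots,b\}$. FLH-OGD: For each $j\in[n]$ a base learner $E^j$ is started at time $j$; it runs projected online gradient descent on $[-B,B]$ on the losses $x\mapsto (y_t-x)^2$, $t\ge j$: its first prediction $x^{(j)}_j$ is a fixed point of $[-B,B]$, and $x^{(j)}_{t+1}=\Pi\big(x^{(j)}_t-\tfrac{1}{2\tau}\cdot 2(x^{(j)}_t-y_t)\big)$ with $\tau=t-j+1$, $\Pi$ the projection onto $[-B,B]$. The FLH meta-algorithm with learning rate $\zeta$ keeps a probability vector $v_t=(v_t^{(1)},\dots,v_t^{(t)})$, $v_1=(1)$; it predicts $x_t=\sum_{j\le t}v_t^{(j)}x^{(j)}_t$; after $y_t$ is revealed it sets $\hat v^{(i)}_{t+1}=v_t^{(i)}e^{-\zeta(y_t-x_t^{(i)})^2}/\sum_{j\le t}v_t^{(j)}e^{-\zeta(y_t-x_t^{(j)})^2}$ for $i\le t$, then $v^{(t+1)}_{t+1}=1/(t+1)$ and $v^{(i)}_{t+1}=(1-\tfrac1{t+1})\hat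 v^{(i)}_{t+1}$. FLH-OGD uses $\zeta=1/(2(G+B)^2)$. Offline optimal: given $C_n>0$, $u_1,\dots,u_n$ is an optimal solution of: minimize $\frac12\sum_{t=1}^n(y_t-\tilde u_t)^2$ subject to $\sum_{t=2}^{n}|\tilde u_t-\tilde u_{t-1}|\le C_n$ and $-B\le\tilde u_t\le B$; with optimal dual variables $\lambda\ge0$ (TV constraint) and $\gamma^\pm_t\ge0$ (box constraints) satisfying the KKT conditions: there are $s_t\in[-1,1]$ with $s_t=\mathrm{sign}(u_{t+1}-u_t)$ whenever $u_{t+1}\ne u_t$, $s_0=s_n=0$, $u_t-y_t=\lambda(s_t-s_{t-1})+\gamma_t^--\gamma_t^+$, and $\lambda(\sum_{t=2}^n|u_t-u_{t-1}|-C_n)=0$, $\gamma_t^-(u_t+B)=0$, $\gamma_t^+(u_t-B)=0$. Structure 1 on $[a,b]\subseteq\{2,\dots,n-1\}$: $u_j=u_a\in(-B,B)$ for all $j\in[a,b]$, $u_b>u_{b+1}$ and $u_a>u_{a-1}$. Structure 2 on $[a,b]\subseteq\{2,\dots,n-1\}$: $u_j=u_a\in(-B,B)$ for all $j\in[a,b]$, $u_b<u_{b+1}$ and $u_a<u_{a-1}$. *)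

theory Defs
  imports Complex_Main
begin

definition proj_box :: "real \<Rightarrow> real \<Rightarrow> real" where
  "proj_box B x = max (- B) (min B x)"

text \<open>Base learner E^j (projected OGD on [-B,B], start point c):
  ogd_pred B c y j k is its prediction x^{(j)}_{j+k} at time t = j + k.\<close>
fun ogd_pred :: "real \<Rightarrow> real \<Rightarrow> (nat \<Rightarrow> real) \<Rightarrow> nat \<Rightarrow> nat \<Rightarrow> real" where
  "ogd_pred B c y j 0 = c"
| "ogd_pred B c y j (Suc k) =
     (let p = ogd_pred B c y j k
      in proj_box B (p - (1 / (2 * real (Suc k))) * (2 * (p - y (j + k)))))"

text \<open>Prediction of base learner E^j at time t (meaningful for t \<ge> j).\<close>
definition base_pred :: "real \<Rightarrow> real \<Rightarrow> (nat \<Rightarrow> real) \<Rightarrow> nat \<Rightarrow> nat \<Rightarrow> real" where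
  "base_pred B c y j t = ogd_pred B c y j (t - j)"

text \<open>FLH weights: flh_weights zeta E y t i = v_t^{(i)}, for t \<ge> 1 and 1 \<le> i \<le> t
  (zero otherwise); E j t is the prediction of base learner j at time t.\<close>
fun flh_weights :: "real \<Rightarrow> (nat \<Rightarrow> nat \<Rightarrow> real) \<Rightarrow> (nat \<Rightarrow> real) \<Rightarrow> nat \<Rightarrow> nat \<Rightarrow> real" where
  "flh_weights \<zeta> E y 0 = (\<lambda>i. 0)"
| "flh_weights \<zeta> E y (Suc 0) = (\<lambda>i. if i = 1 then 1 else 0)"
| "flh_weights \<zeta> E y (Suc (Suc t)) =
     (let v = flh_weights \<zeta> E y (Suc t);
          tt = Suc t;
          Z = (\<Sum>j = 1..tt. v j * exp (- \<zeta> * (y tt - E j tt)\<^sup>2))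
      in (\<lambda>i. if i = Suc tt then 1 / real (Suc tt)
              else if 1 \<le> i \<and> i \<le> tt
                then (1 - 1 / real (Suc tt)) * (v i * exp (- \<zeta> * (y tt - E i tt)\<^sup>2) / Z)
              else 0))"

definition flh_ogd_pred :: "real \<Rightarrow> real \<Rightarrow> real \<Rightarrow> (nat \<Rightarrow> real) \<Rightarrow> nat \<Rightarrow> real" where
  "flh_ogd_pred B G c y t =
     (let \<zeta> = 1 / (2 * (G + B)\<^sup>2);
          E = base_pred B c y
      in (\<Sum>j = 1..t. flh_weights \<zeta> E y t j * E j t))"

definition tv_feasible :: "nat \<Rightarrow> real \<Rightarrow> real \<Rightarrow> (nat \<Rightarrow> real) \<Rightarrow> bool" where
  "tv_feasible n B C w \<longleftrightarrow>
     (\<Sum>t = 2..n. \<bar>w t - w (t - 1)\<bar>) \<le> C \<and> (\<forall>t \<in> {1..n}. - B \<le> w t \<and> w t \<le> B)"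

definition offline_obj :: "nat \<Rightarrow> (nat \<Rightarrow> real) \<Rightarrow> (nat \<Rightarrow> real) \<Rightarrow> real" where
  "offline_obj n y w = (1/2) * (\<Sum>t = 1..n. (y t - w t)\<^sup>2)"

definition offline_optimal :: "nat \<Rightarrow> real \<Rightarrow> real \<Rightarrow> (nat \<Rightarrow> real) \<Rightarrow> (nat \<Rightarrow> real) \<Rightarrow> bool" where
  "offline_optimal n B C y u \<longleftrightarrow>
     tv_feasible n B C u \<and> (\<forall>w. tv_feasible n B C w \<longrightarrow> offline_obj n y u \<le> offline_obj n y w)"

definition kkt :: "nat \<Rightarrow> real \<Rightarrow> real \<Rightarrow> (nat \<Rightarrow> real) \<Rightarrow> (nat \<Rightarrow> real) \<Rightarrow> real
                   \<Rightarrow> (nat \<Rightarrow> real) \<Rightarrow> (nat \<Rightarrow> real) \<Rightarrow> (nat \<Rightarrow> real) \<Rightarrow> bool" where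
  "kkt n B C y u lam gm gp s \<longleftrightarrow>
     lam \<ge> 0 \<and>
     (\<forall>t \<in> {1..n}. gm t \<ge> 0 \<and> gp t \<ge> 0) \<and>
     (\<forall>t \<in> {0..n}. - 1 \<le> s t \<and> s t \<le> 1) \<and>
     (\<forall>t \<in> {1..<n}. u (t + 1) \<noteq> u t \<longrightarrow> s t = sgn (u (t + 1) - u t)) \<and>
     s 0 = 0 \<and> s n = 0 \<and>
     (\<forall>t \<in> {1..n}. u t - y t = lam * (s t - s (t - 1)) + gm t - gp t) \<and>
     lam * ((\<Sum>t = 2..n. \<bar>u t - u (t - 1)\<bar>) - C) = 0 \<and>
     (\<forall>t \<in> {1..n}. gm t * (u t + B) = 0 \<and> gp t * (u t - B) = 0)"

definition structure1 :: "nat \<Rightarrow> real \<Rightarrow> (nat \<Rightarrow> real) \<Rightarrow> nat \<Rightarrow> nat \<Rightarrow> bool" where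
  "structure1 n B u a b \<longleftrightarrow> 2 \<le> a \<and> a \<le> b \<and> b \<le> n - 1 \<and>
     (\<forall>j \<in> {a..b}. u j = u a) \<and> - B < u a \<and> u a < B \<and>
     u b > u (b + 1) \<and> u a > u (a - 1)"

definition structure2 :: "nat \<Rightarrow> real \<Rightarrow> (nat \<Rightarrow> real) \<Rightarrow> nat \<Rightarrow> nat \<Rightarrow> bool" where
  "structure2 n B u a b \<longleftrightarrow> 2 \<le> a \<and> a \<le> b \<and> b \<le> n - 1 \<and>
     (\<forall>j \<in> {a..b}. u j = u a) \<and> - B < u a \<and> u a < B \<and>
     u b < u (b + 1) \<and> u a < u (a - 1)"

end

theory Submission imports Defs "HOL-Analysis.Analysis" begin

lemma expconc_convex:
  fixes \<zeta> y B G :: real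
  assumes z: "\<zeta> = 1 / (2 * (G + B)\<^sup>2)" and GB: "G + B > 0" and yG: "\<bar>y\<bar> \<le> G" and B: "B \<ge> 0"
  shows "convex_on {-B..B} (\<lambda>x. - exp (- \<zeta> * (y - x)\<^sup>2))"
proof (rule f''_ge0_imp_convex[where f' = "\<lambda>x. - exp (- \<zeta> * (y - x)\<^sup>2) * (2 * \<zeta> * (y - x))"
      and f'' = "\<lambda>x. exp (- \<zeta> * (y - x)\<^sup>2) * (2 * \<zeta> - 4 * \<zeta>\<^sup>2 * (y - x)\<^sup>2)"])
  show "convex {-B..B}" by simp
  fix x :: real assume x: "x \<in> {-B..B}"
  show "((\<lambda>x. - exp (- \<zeta> * (y - x)\<^sup>2)) has_real_derivative - exp (- \<zeta> * (y - x)\<^sup>2) * (2 * \<zeta> * (y - x))) (at x)"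
    by (auto intro!: derivative_eq_intros simp: algebra_simps power2_eq_square)
  show "((\<lambda>x. - exp (- \<zeta> * (y - x)\<^sup>2) * (2 * \<zeta> * (y - x))) has_real_derivative exp (- \<zeta> * (y - x)\<^sup>2) * (2 * \<zeta> - 4 * \<zeta>\<^sup>2 * (y - x)\<^sup>2)) (at x)"
    by (auto intro!: derivative_eq_intros simp: algebra_simps power2_eq_square)
  have zp: "\<zeta> > 0" using z GB by simp
  have "\<bar>y - x\<bar> \<le> G + B" using x yG by auto
  hence "\<bar>y - x\<bar>\<^sup>2 \<le> (G + B)\<^sup>2" by (intro power_mono) auto
  hence "(y - x)\<^sup>2 \<le> (G + B)\<^sup>2" by simp
  hence "2 * \<zeta> * (y - x)\<^sup>2 \<le> 2 * \<zeta> * (G + B)\<^sup>2" using zp by (intro mult_left_mono) auto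
  also have "2 * \<zeta> * (G + B)\<^sup>2 = 1" using z GB by simp
  finally have "2 * \<zeta> * (y - x)\<^sup>2 \<le> 1" .
  hence "2 * \<zeta> * (2 * \<zeta> * (y - x)\<^sup>2) \<le> 2 * \<zeta> * 1" using zp by (intro mult_left_mono) auto
  hence "4 * \<zeta>\<^sup>2 * (y - x)\<^sup>2 \<le> 2 * \<zeta>" by (simp add: power2_eq_square algebra_simps)
  thus "0 \<le> exp (- \<zeta> * (y - x)\<^sup>2) * (2 * \<zeta> - 4 * \<zeta>\<^sup>2 * (y - x)\<^sup>2)" by simp
qed

lemma expconc:
  fixes \<zeta> y B G :: real and S :: "nat set" and v x :: "nat \<Rightarrow> real"
  assumes z: "\<zeta> = 1 / (2 * (G + B)\<^sup>2)" and GB: "G + B > 0" and yG: "\<bar>y\<bar> \<le> G" and B: "B \<ge> 0"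
    and S: "finite S" "S \<noteq> {}" and v: "\<And>i. i \<in> S \<Longrightarrow> v i \<ge> 0" "sum v S = 1"
    and x: "\<And>i. i \<in> S \<Longrightarrow> - B \<le> x i \<and> x i \<le> B"
  shows "(\<Sum>i\<in>S. v i * exp (- \<zeta> * (y - x i)\<^sup>2)) \<le> exp (- \<zeta> * (y - (\<Sum>i\<in>S. v i * x i))\<^sup>2)"
proof -
  have "(\<lambda>x. - exp (- \<zeta> * (y - x)\<^sup>2)) (\<Sum>i\<in>S. v i *\<^sub>R x i) \<le> (\<Sum>i\<in>S. v i * (\<lambda>x. - exp (- \<zeta> * (y - x)\<^sup>2)) (x i))"
    by (rule convex_on_sum[OF S expconc_convex[OF z GB yG B] v(2) v(1)]) (use x in auto)
  thus ?thesis by (simp add: sum_negf)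
qed

lemma proj_nonexp:
  fixes B z u :: real assumes "- B \<le> u" "u \<le> B"
  shows "(proj_box B z - u)\<^sup>2 \<le> (z - u)\<^sup>2"
proof -
  have "\<bar>proj_box B z - u\<bar> \<le> \<bar>z - u\<bar>" using assms unfolding proj_box_def by auto
  hence "\<bar>proj_box B z - u\<bar>\<^sup>2 \<le> \<bar>z - u\<bar>\<^sup>2" by (intro power_mono) auto
  thus ?thesis by simp
qed

lemma proj_range: "B \<ge> 0 \<Longrightarrow> - B \<le> proj_box B z \<and> proj_box B z \<le> B"
  unfolding proj_box_def by auto

lemma ogd_range:
  assumes "- B \<le> c" "c \<le> B" shows "- B \<le> ogd_pred B c y j k \<and> ogd_pred B c y j k \<le> B"
  using assms by (cases k) (auto simp: Let_def proj_box_def)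

lemma ogd_step_ineq:
  fixes p yv u B :: real and k :: nat
  assumes "- B \<le> u" "u \<le> B"
  defines "p' \<equiv> proj_box B (p - (1 / (2 * real (Suc k))) * (2 * (p - yv)))"
  shows "(yv - p)\<^sup>2 - (yv - u)\<^sup>2 \<le> real k * (p - u)\<^sup>2 - real (Suc k) * (p' - u)\<^sup>2 + (p - yv)\<^sup>2 / real (Suc k)"
proof -
  define \<tau> where "\<tau> = real (Suc k)"
  have tp: "\<tau> > 0" unfolding \<tau>_def by simp
  define z where "z = p - (p - yv) / \<tau>"
  have "(1 / (2 * real (Suc k))) * (2 * (p - yv)) = (p - yv) / \<tau>" unfolding \<tau>_def by (simp add: field_simps)
  hence pz: "p' = proj_box B z" unfolding p'_def z_def by simp
  have "(p' - u)\<^sup>2 \<le> (z - u)\<^sup>2" unfolding pz by (rule proj_nonexp) (use assms(1,2) in auto)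
  hence 1: "\<tau> * (p' - u)\<^sup>2 \<le> \<tau> * (z - u)\<^sup>2" using tp by simp
  have 2: "\<tau> * (z - u)\<^sup>2 = \<tau> * (p - u)\<^sup>2 - 2 * (p - u) * (p - yv) + (p - yv)\<^sup>2 / \<tau>"
    unfolding z_def using tp by (simp add: field_simps power2_eq_square)
  have 3: "real k = \<tau> - 1" unfolding \<tau>_def by simp
  show ?thesis unfolding 3 \<tau>_def[symmetric] using 1 2 by (simp add: algebra_simps power2_eq_square)
qed

lemma ogd_regret:
  fixes B c u :: real and y :: "nat \<Rightarrow> real"
  assumes "- B \<le> u" "u \<le> B"
  shows "(\<Sum>k<L. (y (j + k) - ogd_pred B c y j k)\<^sup>2 - (y (j + k) - u)\<^sup>2) + real L * (ogd_pred B c y j L - u)\<^sup>2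
     \<le> (\<Sum>k<L. (ogd_pred B c y j k - y (j + k))\<^sup>2 / real (Suc k))"
proof (induction L)
  case 0 then show ?case by simp
next
  case (Suc L)
  have "(y (j + L) - ogd_pred B c y j L)\<^sup>2 - (y (j + L) - u)\<^sup>2 \<le> real L * (ogd_pred B c y j L - u)\<^sup>2 - real (Suc L) * (ogd_pred B c y j (Suc L) - u)\<^sup>2 + (ogd_pred B c y j L - y (j + L))\<^sup>2 / real (Suc L)"
    using ogd_step_ineq[OF assms, where p="ogd_pred B c y j L" and yv="y (j + L)" and k=L] by (simp add: Let_def)
  with Suc.IH show ?case by simp
qed

lemma harm_bound: "L \<ge> 1 \<Longrightarrow> (\<Sum>k<L. 1 / real (Suc k)) \<le> 1 + ln (real L)"
proof (induction L rule: dec_induct)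
  case base then show ?case by simp
next
  case (step L)
  have L: "real L \<ge> 1" using step by simp
  have "ln (real L / real (Suc L)) \<le> real L / real (Suc L) - 1" by (rule ln_le_minus_one) (use L in simp)
  also have "\<dots> = - 1 / real (Suc L)" by (simp add: field_simps)
  finally have "1 / real (Suc L) \<le> ln (real (Suc L)) - ln (real L)" using L by (simp add: ln_div)
  with step.IH show ?case by simp
qed

definition Zf :: "real \<Rightarrow> (nat \<Rightarrow> nat \<Rightarrow> real) \<Rightarrow> (nat \<Rightarrow> real) \<Rightarrow> nat \<Rightarrow> real" where
  "Zf \<zeta> E y t = (\<Sum>j = 1..t. flh_weights \<zeta> E y t j * exp (- \<zeta> * (y t - E j t)\<^sup>2))"

lemma flh_Suc:
  assumes "t \<ge> 1"
  shows "flh_weights \<zeta> E y (Suc t) i = (if i = Suc t then 1 / real (Suc t)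
     else if 1 \<le> i \<and> i \<le> t then (1 - 1 / real (Suc t)) * (flh_weights \<zeta> E y t i * exp (- \<zeta> * (y t - E i t)\<^sup>2) / Zf \<zeta> E y t)
     else 0)"
proof -
  obtain t' where t: "t = Suc t'" using assms by (cases t) auto
  show ?thesis unfolding t Zf_def by (simp add: Let_def)
qed

lemma flh_inv:
  assumes "t \<ge> 1"
  shows "(\<forall>i. 1 \<le> i \<and> i \<le> t \<longrightarrow> 0 < flh_weights \<zeta> E y t i) \<and> sum (flh_weights \<zeta> E y t) {1..t} = 1"
  using assms
proof (induction t rule: dec_induct)
  case base then show ?case by simp
next
  case (step t)
  let ?w = "flh_weights \<zeta> E y t"
  let ?e = "\<lambda>i. exp (- \<zeta> * (y t - E i t)\<^sup>2)"
  have t1: "t \<ge> 1" using step by simp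
  have Zpos: "Zf \<zeta> E y t > 0" unfolding Zf_def
    by (rule sum_pos2[where i=1]) (use step.IH t1 in \<open>auto intro!: mult_nonneg_nonneg less_imp_le\<close>)
  have pos: "\<forall>i. 1 \<le> i \<and> i \<le> Suc t \<longrightarrow> 0 < flh_weights \<zeta> E y (Suc t) i"
  proof (intro allI impI)
    fix i assume i: "1 \<le> i \<and> i \<le> Suc t"
    show "0 < flh_weights \<zeta> E y (Suc t) i"
    proof (cases "i = Suc t")
      case True then show ?thesis by (simp add: flh_Suc[OF t1])
    next
      case False
      hence "i \<le> t" using i by simp
      hence "0 < ?w i" using step.IH i by auto
      moreover have "1 - 1 / real (Suc t) > 0" using t1 by (simp add: field_simps)
      ultimately show ?thesis using False i Zpos by (simp add: flh_Suc[OF t1])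
    qed
  qed
  have "sum (flh_weights \<zeta> E y (Suc t)) {1..t} = (\<Sum>i=1..t. (1 - 1 / real (Suc t)) * (?w i * ?e i / Zf \<zeta> E y t))"
    by (rule sum.cong) (auto simp: flh_Suc[OF t1])
  also have "\<dots> = (1 - 1 / real (Suc t)) * ((\<Sum>i=1..t. ?w i * ?e i) / Zf \<zeta> E y t)"
    by (simp add: sum_distrib_left sum_divide_distrib)
  also have "\<dots> = 1 - 1 / real (Suc t)" using Zpos by (simp add: Zf_def)
  finally have "sum (flh_weights \<zeta> E y (Suc t)) {1..Suc t} = 1"
    by (simp add: flh_Suc[OF t1])
  with pos show ?case by blast
qed

lemma Zf_pos: "t \<ge> 1 \<Longrightarrow> Zf \<zeta> E y t > 0"
  unfolding Zf_def
  by (rule sum_pos2[where i=1]) (use flh_inv[of t \<zeta> E y] in \<open>auto intro!: mult_nonneg_nonneg less_imp_le\<close>)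

lemma flh_diag: "a \<ge> 1 \<Longrightarrow> flh_weights \<zeta> E y a a = 1 / real a"
proof (cases "a = 1")
  case False
  assume "a \<ge> 1"
  then obtain t where "a = Suc t" "t \<ge> 1" using False by (cases a) auto
  then show ?thesis by (simp add: flh_Suc)
qed simp

lemma flh_le1:
  assumes "t \<ge> 1" "1 \<le> i" "i \<le> t"
  shows "flh_weights \<zeta> E y (Suc t) i \<le> 1"
proof -
  let ?w = "flh_weights \<zeta> E y t"
  let ?e = "\<lambda>i. exp (- \<zeta> * (y t - E i t)\<^sup>2)"
  have Zp: "Zf \<zeta> E y t > 0" by (rule Zf_pos) fact
  have "?w i * ?e i \<le> Zf \<zeta> E y t" unfolding Zf_def
    by (rule member_le_sum) (use assms flh_inv[of t \<zeta> E y] in \<open>auto intro!: mult_nonneg_nonneg less_imp_le\<close>)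
  hence r: "?w i * ?e i / Zf \<zeta> E y t \<le> 1" using Zp by simp
  have r0: "?w i * ?e i / Zf \<zeta> E y t \<ge> 0" using Zp assms flh_inv[of t \<zeta> E y]
    by (auto intro!: mult_nonneg_nonneg divide_nonneg_pos less_imp_le)
  have "(1 - 1 / real (Suc t)) * (?w i * ?e i / Zf \<zeta> E y t) \<le> 1 * 1"
    by (rule mult_mono) (use r r0 in auto)
  thus ?thesis using assms by (simp add: flh_Suc)
qed

lemma flh_main:
  fixes \<zeta> :: real and E :: "nat \<Rightarrow> nat \<Rightarrow> real" and X :: "nat \<Rightarrow> real"
  assumes a: "a \<ge> 1" and hZ: "\<And>t. a \<le> t \<Longrightarrow> t \<le> T \<Longrightarrow> Zf \<zeta> E y t \<le> exp (- \<zeta> * (y t - X t)\<^sup>2)"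
  shows "a + k \<le> Suc T \<Longrightarrow> (1 / real (a + k)) * exp (\<zeta> * (\<Sum>s\<in>{a..<a+k}. (y s - X s)\<^sup>2 - (y s - E a s)\<^sup>2)) \<le> flh_weights \<zeta> E y (a + k) a"
proof (induction k)
  case 0 then show ?case using flh_diag[OF a] by simp
next
  case (Suc k)
  define t where "t = a + k"
  have t1: "t \<ge> 1" "a \<le> t" "t \<le> T" using a Suc.prems unfolding t_def by auto
  define S where "S = (\<Sum>s\<in>{a..<t}. (y s - X s)\<^sup>2 - (y s - E a s)\<^sup>2)"
  define d where "d = (y t - X t)\<^sup>2 - (y t - E a t)\<^sup>2"
  define w where "w = flh_weights \<zeta> E y t a"
  define Z where "Z = Zf \<zeta> E y t"
  have IH: "(1 / real t) * exp (\<zeta> * S) \<le> w" using Suc.IH Suc.prems unfolding t_def S_def w_def by simp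
  have Zp: "Z > 0" unfolding Z_def by (rule Zf_pos) fact
  have "w \<ge> 0" unfolding w_def using flh_inv[of t \<zeta> E y] t1 a by (auto intro: less_imp_le)
  have ZX: "Z \<le> exp (- \<zeta> * (y t - X t)\<^sup>2)" unfolding Z_def using hZ t1 by simp
  have eq: "flh_weights \<zeta> E y (Suc t) a = (real t / real (Suc t)) * (w * exp (- \<zeta> * (y t - E a t)\<^sup>2) / Z)"
    using t1 a unfolding w_def Z_def by (simp add: flh_Suc field_simps)
  have "exp (\<zeta> * d) = exp (- \<zeta> * (y t - E a t)\<^sup>2) / exp (- \<zeta> * (y t - X t)\<^sup>2)"
    unfolding d_def by (simp add: exp_diff[symmetric] algebra_simps)
  also have "\<dots> \<le> exp (- \<zeta> * (y t - E a t)\<^sup>2) / Z"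
    using ZX Zp by (intro divide_left_mono) auto
  finally have ed: "exp (\<zeta> * d) \<le> exp (- \<zeta> * (y t - E a t)\<^sup>2) / Z" .
  have "(1 / real (Suc t)) * exp (\<zeta> * (S + d)) = (real t / real (Suc t)) * ((1 / real t) * exp (\<zeta> * S)) * exp (\<zeta> * d)"
    using t1 by (simp add: distrib_left exp_add)
  also have "\<dots> \<le> (real t / real (Suc t)) * w * (exp (- \<zeta> * (y t - E a t)\<^sup>2) / Z)"
    using IH ed \<open>w \<ge> 0\<close> by (intro mult_mono) auto
  also have "\<dots> = flh_weights \<zeta> E y (Suc t) a" unfolding eq by simp
  finally have "(1 / real (Suc t)) * exp (\<zeta> * (S + d)) \<le> flh_weights \<zeta> E y (Suc t) a" .
  moreover have "S + d = (\<Sum>s\<in>{a..<Suc t}. (y s - X s)\<^sup>2 - (y s - E a s)\<^sup>2)"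
    unfolding S_def d_def using t1 by simp
  ultimately show ?case unfolding t_def by simp
qed

lemma sum_shift_lt: "(\<Sum>k<(L::nat). g (a + k)) = (\<Sum>j\<in>{a..<a+L}. (g j :: real))"
  by (induction L) auto

lemma sq_sum: "(\<Sum>j\<in>A. (y j - v)\<^sup>2) = (\<Sum>j\<in>A. (y j)\<^sup>2) - 2 * v * (\<Sum>j\<in>A. y j) + real (card A) * v\<^sup>2"
proof -
  have "(\<Sum>j\<in>A. (y j - v)\<^sup>2) = (\<Sum>j\<in>A. (y j)\<^sup>2 - 2 * v * y j + v\<^sup>2)"
    by (rule sum.cong) (auto simp: power2_diff)
  also have "\<dots> = (\<Sum>j\<in>A. (y j)\<^sup>2) - (\<Sum>j\<in>A. 2 * v * y j) + (\<Sum>j\<in>A. v\<^sup>2)"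
    by (simp add: sum.distrib sum_subtractf)
  also have "(\<Sum>j\<in>A. 2 * v * y j) = 2 * v * (\<Sum>j\<in>A. y j)" by (simp add: sum_distrib_left)
  finally show ?thesis by simp
qed

lemma telescope: "(a::nat) \<ge> 1 \<Longrightarrow> (\<Sum>t=a..a+k. (s t - s (t - 1) :: real)) = s (a + k) - s (a - 1)"
proof (induction k)
  case 0 then show ?case by simp
next
  case (Suc k)
  have "{a..a + Suc k} = insert (Suc (a + k)) {a..a+k}" by auto
  with Suc show ?case by simp
qed

lemma ln3: "ln (3::real) \<ge> 2/3"
proof -
  have "ln (1/3::real) \<le> 1/3 - 1" by (rule ln_le_minus_one) simp
  thus ?thesis by (simp add: ln_div)
qed

theorem lemma5:
  fixes n a b :: nat and B G C c lam :: real
    and y u gm gp s :: "nat \<Rightarrow> real"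
  assumes "n \<ge> 3" and "B \<ge> 1" and "G \<ge> B"
    and "\<forall>t \<in> {1..n}. - G \<le> y t \<and> y t \<le> G"
    and "- B \<le> c" and "c \<le> B"
    and "C > 0"
    and "offline_optimal n B C y u"
    and "kkt n B C y u lam gm gp s"
    and "structure1 n B u a b \<or> structure2 n B u a b"
    and "- B \<le> (\<Sum>j = a..b. y j) / real (b - a + 1)"
    and "(\<Sum>j = a..b. y j) / real (b - a + 1) \<le> B"
  shows "(\<Sum>j = a..b. (y j - flh_ogd_pred B G c y j)\<^sup>2 - (y j - u j)\<^sup>2)
           \<le> 10 * (B + G)\<^sup>2 * ln (real n) - 4 * lam\<^sup>2 / real (b - a + 1)"
proof -
  note n3 = assms(1) and B1 = assms(2) and GB = assms(3) and yG = assms(4) and c = assms(5,6)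
    and K = assms(9) and St = assms(10) and mB = assms(11,12)
  have ab: "2 \<le> a" "a \<le> b" "b \<le> n - 1"
    using St unfolding structure1_def structure2_def by blast+
  have uc: "\<And>j. j \<in> {a..b} \<Longrightarrow> u j = u a" "- B < u a" "u a < B"
    using St unfolding structure1_def structure2_def by blast+
  define \<zeta> :: real where "\<zeta> = 1 / (2 * (G + B)\<^sup>2)"
  define E where "E = base_pred B c y"
  define X where "X = flh_ogd_pred B G c y"
  define L where "L = b - a + 1"
  define Y where "Y = (\<Sum>j = a..b. y j)"
  define m where "m = Y / real L"
  have GBp: "G + B > 0" using B1 GB by simp
  have zp: "\<zeta> > 0" unfolding \<zeta>_def using GBp by simp
  have L1: "L \<ge> 1" "real L > 0" unfolding L_def by auto
  have cardL: "card {a..b} = L" unfolding L_def using ab by simp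
  have Xdef: "\<And>t. X t = (\<Sum>j = 1..t. flh_weights \<zeta> E y t j * E j t)"
    unfolding X_def flh_ogd_pred_def \<zeta>_def E_def by (simp add: Let_def)
  have Erange: "\<And>j t. - B \<le> E j t \<and> E j t \<le> B"
    unfolding E_def base_pred_def using ogd_range[OF c] by blast
  have yabs: "\<And>t. t \<in> {1..n} \<Longrightarrow> \<bar>y t\<bar> \<le> G"
  proof -
    fix t assume "t \<in> {1..n}"
    hence "- G \<le> y t \<and> y t \<le> G" using yG by blast
    thus "\<bar>y t\<bar> \<le> G" by linarith
  qed
  have bn: "b + 1 \<le> n" using ab n3 by simp

  have hZ: "\<And>t. a \<le> t \<Longrightarrow> t \<le> b \<Longrightarrow> Zf \<zeta> E y t \<le> exp (- \<zeta> * (y t - X t)\<^sup>2)"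
  proof -
    fix t assume t: "a \<le> t" "t \<le> b"
    have t1: "t \<ge> 1" using t ab by simp
    show "Zf \<zeta> E y t \<le> exp (- \<zeta> * (y t - X t)\<^sup>2)"
      unfolding Zf_def Xdef
      by (rule expconc[OF \<zeta>_def GBp yabs]) (use t ab bn B1 Erange flh_inv[OF t1, of \<zeta> E y] in \<open>auto intro: less_imp_le\<close>)
  qed
  define D where "D = (\<Sum>j = a..b. (y j - X j)\<^sup>2 - (y j - E a j)\<^sup>2)"
  have "(1 / real (a + (b + 1 - a))) * exp (\<zeta> * (\<Sum>s\<in>{a..<a + (b + 1 - a)}. (y s - X s)\<^sup>2 - (y s - E a s)\<^sup>2))
      \<le> flh_weights \<zeta> E y (a + (b + 1 - a)) a"
    by (rule flh_main[where T=b]) (use ab hZ in auto)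
  moreover have "a + (b + 1 - a) = Suc b" using ab by simp
  moreover have "{a..<Suc b} = {a..b}" by auto
  ultimately have "(1 / real (Suc b)) * exp (\<zeta> * D) \<le> flh_weights \<zeta> E y (Suc b) a"
    unfolding D_def by simp
  also have "\<dots> \<le> 1" by (rule flh_le1) (use ab in auto)
  finally have "exp (\<zeta> * D) \<le> real (Suc b)" by (simp add: field_simps)
  hence "\<zeta> * D \<le> ln (real (Suc b))" by (simp add: ln_ge_iff)
  also have "\<dots> \<le> ln (real n)" using bn by simp
  finally have "\<zeta> * D \<le> ln (real n)" .
  hence FLH: "D \<le> 2 * (G + B)\<^sup>2 * ln (real n)" using GBp unfolding \<zeta>_def by (simp add: field_simps)

  have mr: "- B \<le> m" "m \<le> B" using mB unfolding m_def Y_def L_def by auto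
  have shift: "\<And>(g :: nat \<Rightarrow> real). (\<Sum>j = a..b. g j) = (\<Sum>k<L. g (a + k))"
  proof -
    fix g :: "nat \<Rightarrow> real"
    have "{a..<a+L} = {a..b}" unfolding L_def using ab by auto
    thus "(\<Sum>j = a..b. g j) = (\<Sum>k<L. g (a + k))" by (simp add: sum_shift_lt)
  qed
  have Eap: "\<And>k. E a (a + k) = ogd_pred B c y a k" unfolding E_def base_pred_def by simp
  have "(\<Sum>k<L. (y (a + k) - ogd_pred B c y a k)\<^sup>2 - (y (a + k) - m)\<^sup>2) + real L * (ogd_pred B c y a L - m)\<^sup>2
     \<le> (\<Sum>k<L. (ogd_pred B c y a k - y (a + k))\<^sup>2 / real (Suc k))"
    by (rule ogd_regret[OF mr])
  also have "\<dots> \<le> (\<Sum>k<L. (G + B)\<^sup>2 * (1 / real (Suc k)))"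
  proof (rule sum_mono)
    fix k assume k: "k \<in> {..<L}"
    have "a + k \<in> {1..n}" using k ab unfolding L_def by auto
    hence "\<bar>ogd_pred B c y a k - y (a + k)\<bar> \<le> G + B" using yabs ogd_range[OF c, of y a k] by fastforce
    hence "\<bar>ogd_pred B c y a k - y (a + k)\<bar>\<^sup>2 \<le> (G + B)\<^sup>2" by (intro power_mono) auto
    thus "(ogd_pred B c y a k - y (a + k))\<^sup>2 / real (Suc k) \<le> (G + B)\<^sup>2 * (1 / real (Suc k))"
      by (simp add: divide_right_mono)
  qed
  also have "\<dots> = (G + B)\<^sup>2 * (\<Sum>k<L. 1 / real (Suc k))" by (simp add: sum_distrib_left)
  also have "\<dots> \<le> (G + B)\<^sup>2 * (1 + ln (real L))" by (intro mult_left_mono harm_bound L1) auto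
  also have "\<dots> \<le> (G + B)\<^sup>2 * (1 + ln (real n))"
    using L1 ab bn unfolding L_def by (intro mult_left_mono) auto
  finally have OGD: "(\<Sum>j = a..b. (y j - E a j)\<^sup>2 - (y j - m)\<^sup>2) \<le> (G + B)\<^sup>2 * (1 + ln (real n))"
    unfolding shift Eap by (smt (verit) mult_nonneg_nonneg of_nat_0_le_iff zero_le_power2)

  have Kt: "\<And>t. t \<in> {a..b} \<Longrightarrow> u a - y t = lam * (s t - s (t - 1))"
  proof -
    fix t assume t: "t \<in> {a..b}"
    have t1: "t \<in> {1..n}" using t ab bn by auto
    have ut: "u t = u a" using t uc(1) by blast
    have "gm t * (u t + B) = 0" "gp t * (u t - B) = 0" using K t1 unfolding kkt_def by auto
    hence "gm t = 0" "gp t = 0" using ut uc(2,3) by auto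
    moreover have "u t - y t = lam * (s t - s (t - 1)) + gm t - gp t" using K t1 unfolding kkt_def by auto
    ultimately show "u a - y t = lam * (s t - s (t - 1))" using ut by simp
  qed
  have "real L * u a - Y = (\<Sum>t = a..b. u a - y t)" unfolding Y_def using cardL by (simp add: sum_subtractf)
  also have "\<dots> = (\<Sum>t = a..b. lam * (s t - s (t - 1)))" by (rule sum.cong) (auto simp: Kt)
  also have "\<dots> = lam * (\<Sum>t = a..a + (b - a). s t - s (t - 1))" using ab by (simp add: sum_distrib_left)
  also have "\<dots> = lam * (s b - s (a - 1))" using ab telescope[where a=a and k="b - a" and s=s] by simp
  finally have KS: "real L * u a - Y = lam * (s b - s (a - 1))" .
  have dir: "(u (b+1) < u b \<and> u (a-1) < u a) \<or> (u b < u (b+1) \<and> u a < u (a-1))"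
    using St unfolding structure1_def structure2_def by blast
  have Ks: "\<forall>t\<in>{1..<n}. u (t+1) \<noteq> u t \<longrightarrow> s t = sgn (u (t+1) - u t)" using K unfolding kkt_def by blast
  have sgnb: "s b = sgn (u (b + 1) - u b)"
  proof -
    have "b \<in> {1..<n}" using ab bn by auto
    moreover have "u (b+1) \<noteq> u b" using dir by auto
    ultimately show ?thesis using Ks by blast
  qed
  have sgna: "s (a - 1) = sgn (u a - u (a - 1))"
  proof -
    have "a - 1 \<in> {1..<n}" "a - 1 + 1 = a" using ab bn by auto
    moreover have "u a \<noteq> u (a - 1)" using dir by auto
    ultimately show ?thesis using Ks by metis
  qed
  have Ym: "Y = real L * m" unfolding m_def using L1 by simp
  have e: "real L * (u a - m) = lam * (s b - s (a - 1))"
    using KS unfolding Ym by (simp add: algebra_simps)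
  have s2: "(s b - s (a - 1))\<^sup>2 = 4"
  proof (rule disjE[OF dir])
    assume h: "u (b+1) < u b \<and> u (a-1) < u a"
    hence "s b = -1" "s (a - 1) = 1" unfolding sgnb sgna by simp_all
    thus ?thesis by simp
  next
    assume h: "u b < u (b+1) \<and> u a < u (a-1)"
    hence "s b = 1" "s (a - 1) = -1" unfolding sgnb sgna by simp_all
    thus ?thesis by simp
  qed
  have "(real L * (u a - m))\<^sup>2 = 4 * lam\<^sup>2" unfolding e power_mult_distrib s2 by simp
  moreover have "real L * (m - u a)\<^sup>2 = (real L * (u a - m))\<^sup>2 / real L"
  proof -
    have "(real L * (u a - m))\<^sup>2 / real L = real L * (u a - m)\<^sup>2"
      using L1 by (simp add: power_mult_distrib power2_eq_square)
    thus ?thesis by (simp add: power2_commute)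
  qed
  ultimately have sqm: "real L * (m - u a)\<^sup>2 = 4 * lam\<^sup>2 / real L" by simp
  have S1: "(\<Sum>j = a..b. (y j - u a)\<^sup>2) = (\<Sum>j = a..b. (y j)\<^sup>2) - 2 * u a * Y + real L * (u a)\<^sup>2"
    unfolding sq_sum cardL Y_def ..
  have S2: "(\<Sum>j = a..b. (y j - m)\<^sup>2) = (\<Sum>j = a..b. (y j)\<^sup>2) - 2 * m * Y + real L * m\<^sup>2"
    unfolding sq_sum cardL Y_def ..
  have "(\<Sum>j = a..b. (y j - u j)\<^sup>2) = (\<Sum>j = a..b. (y j - u a)\<^sup>2)"
  proof (rule sum.cong[OF refl])
    fix j assume "j \<in> {a..b}"
    then show "(y j - u j)\<^sup>2 = (y j - u a)\<^sup>2" using uc(1)[of j] by simp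
  qed
  also have "\<dots> = (\<Sum>j = a..b. (y j - m)\<^sup>2) + real L * (m - u a)\<^sup>2"
    unfolding S1 S2 Ym by (simp add: power2_eq_square algebra_simps)
  finally have U: "(\<Sum>j = a..b. (y j - u j)\<^sup>2) = (\<Sum>j = a..b. (y j - m)\<^sup>2) + 4 * lam\<^sup>2 / real L" using sqm by simp

  have ln1: "1 \<le> 7 * ln (real n)"
  proof -
    have "ln (3::real) \<le> ln (real n)" using n3 by simp
    thus ?thesis using ln3 by simp
  qed
  have "(\<Sum>j = a..b. (y j - X j)\<^sup>2 - (y j - u j)\<^sup>2)
     = D + (\<Sum>j = a..b. (y j - E a j)\<^sup>2 - (y j - m)\<^sup>2) - 4 * lam\<^sup>2 / real L"
    unfolding D_def sum_subtractf U by simp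
  also have "\<dots> \<le> 2 * (G + B)\<^sup>2 * ln (real n) + (G + B)\<^sup>2 * (1 + ln (real n)) - 4 * lam\<^sup>2 / real L"
    using FLH OGD by simp
  also have "\<dots> \<le> 10 * (B + G)\<^sup>2 * ln (real n) - 4 * lam\<^sup>2 / real L"
  proof -
    have "(G + B)\<^sup>2 * 1 \<le> (G + B)\<^sup>2 * (7 * ln (real n))" using ln1 by (intro mult_left_mono) auto
    thus ?thesis by (simp add: algebra_simps)
  qed
  finally show ?thesis unfolding X_def L_def .
qed

end
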